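(* Let $\mathscr{Z}=[\mathscr{Z}_1,\dots,\mathscr{Z}_k]\in\mathbb{R}^{n\times ks\times n_3}$ with $\mathscr{Z}_j\in\mathbb{R}^{n\times s\times n_3}$ and $s<n$, and suppose the tubal-global Gram–Schmidt procedure described in the context runs to completion on $\mathscr{Z}$ (no normalization breaks down). Then $\mathscr{Z}=\mathscr{Q}\star(\mathscr{R}\circledast\mathscr{I}_{ssn_3})$, where $\mathscr{Q}=[\mathscr{Q}_1,\dots,\mathscr{Q}_k]\in\mathbb{R}^{n\times ks\times n_3}$ is T-orthonormal, satisfying $\mathscr{Q}^T\diamondsuit\mathscr{Q}=\mathscr{I}_{kkn_3}$, and $\mathscr{R}\in\mathbb{R}^{k\times k\times n_3}$ is the upper triangular tensor (every frontal slice upper triangular) whose $(i,j)$ tube is $\mathbf{r}_{i,j}$ for $i\le j$ and the zero tube for $i>j$.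
   Context: All tensors are real third-order arrays. For $\mathscr{A}\in\mathbb{R}^{n_1\times n_2\times n_3}$, $\widehat{\mathscr{A}}=\mathscr{A}\times_3F_{n_3}$ denotes the tensor obtained by applying the discrete Fourier transform ($F_{n_3}$ with entries $\omega^{(i-1)(j-1)}$, $\omega=e^{-2\pi\mathrm{i}/n_3}$) to each tube $\mathscr{A}(i,j,:)$; its frontal slices $\hat A^{(k)}$ are the Fourier slices. T-product: $\mathscr{A}\star\mathscr{B}$ has Fourier slices $\hat A^{(k)}\hat B^{(k)}$. Transpose $\mathscr{A}^T$: transpose each frontal slice and reverse the order of frontal slices $2,\dots,n_3$. $\mathscr{I}_{nnn_3}$: first frontal slice $I_n$, others zero. A tube is an element of $\mathbb{R}^{1\times1\times n_3}$; $\mathbf{e}$ is the tube with entries $(1,0,\dots,0)$. For a tube $\mathbf{a}$ and a tensor $\mathscr{B}$, $\mathbf{a}\divideontimes\mathscr{B}$ is the tensor whose $(i,j)$ tube is $\mathbf{a}\star\mathscr{B}(i,j,:)$. T-Kronecker product $\mathscr{A}\circledast\mathscr{B}$: Fourier slices $\hat A^{(k)}\otimes\hat B^{(k)}$. T-trace of a square-sliced tensor: the tube whose $k$-th Fourier slice is the trace of the $k$-th Fourier slice. Tubal inner product of $\mathscr{X},\mathscr{Y}\in\mathbb{R}^{n\times s\times n_3}$: $\langle\mathscr{X},\mathscr{Y}\rangle_T=\text{T-trace}(\mathscr{X}^T\star\mathscr{Y})$. T-diamond product: for $\mathscr{A}=[\mathscr{A}_1,\dots,\mathscr{A}_p]$,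 $\mathscr{B}=[\mathscr{B}_1,\dots,\mathscr{B}_\ell]$ (blocks in $\mathbb{R}^{n\times s\times n_3}$), $\mathscr{A}^T\diamondsuit\mathscr{B}\in\mathbb{R}^{p\times\ell\times n_3}$ has $(i,j)$ tube $\langle\mathscr{A}_i,\mathscr{B}_j\rangle_T$. Normalization of a nonzero $\mathscr{W}\in\mathbb{R}^{n\times s\times n_3}$: let $\mathbf{a}$ be the tube whose $k$-th Fourier coefficient is $\|\hat W^{(k)}\|_F$ (breakdown if some of these is zero/below tolerance) and let $\mathscr{Q}$ be the tensor with Fourier slices $\hat W^{(k)}/\|\hat W^{(k)}\|_F$; output $[\mathscr{Q},\mathbf{a}]$, so that $\mathscr{W}=\mathbf{a}\divideontimes\mathscr{Q}$ and $\langle\mathscr{Q},\mathscr{Q}\rangle_T=\mathbf{e}$. Tubal-global Gram–Schmidt procedure: $[\mathscr{Q}_1,\mathbf{r}_{1,1}]=\mathrm{Normalization}(\mathscr{Z}_1)$; for $j=2,\dots,k$: set $\mathscr{W}=\mathscr{Z}_j$; for $i=1,\dots,j-1$ set $\mathbf{r}_{i,j}=\langle\mathscr{Q}_i,\mathscr{W}\rangle_T$ and $\mathscr{W}\leftarrow\mathscr{W}-\mathbf{r}_{i,j}\divideontimes\mathscr{Q}_i$; then $[\mathscr{Q}_j,\mathbf{r}_{j,j}]=\mathrm{Normalization}(\mathscr{W})$. *)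

theory Defs
  imports Complex_Main
begin

text \<open>Real third-order tensors are functions nat => nat => nat => real; A i j is the
  tube A(i,j,:) (a function nat => real, entries 0..n3-1).  All indices are 0-based.
  Dimensions are passed explicitly; only entries within range are meaningful.\<close>

type_synonym tube = "nat \<Rightarrow> real"
type_synonym tensor = "nat \<Rightarrow> nat \<Rightarrow> tube"

definition omega :: "nat \<Rightarrow> complex" where
  "omega n3 = cis (- 2 * pi / real n3)"

definition dft :: "nat \<Rightarrow> tube \<Rightarrow> nat \<Rightarrow> complex" where
  "dft n3 a k = (\<Sum>l<n3. complex_of_real (a l) * omega n3 ^ (k * l))"

definition idft :: "nat \<Rightarrow> (nat \<Rightarrow> complex) \<Rightarrow> tube" where
  "idft n3 c l = Re ((\<Sum>k<n3. c k * cnj (omega n3) ^ (k * l)) / of_nat n3)"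

definition zero_tube :: tube where "zero_tube = (\<lambda>l. 0)"
definition e_tube :: tube where "e_tube = (\<lambda>l. if l = 0 then 1 else 0)"

definition tid :: tensor where
  "tid = (\<lambda>i j l. if i = j \<and> l = 0 then 1 else 0)"

definition tprod :: "nat \<Rightarrow> nat \<Rightarrow> tensor \<Rightarrow> tensor \<Rightarrow> tensor" where
  "tprod n3 m A B = (\<lambda>i j. idft n3 (\<lambda>k. \<Sum>l<m. dft n3 (A i l) k * dft n3 (B l j) k))"

text \<open>Transpose: transpose each frontal slice, reverse order of slices 2..n3.\<close>
definition ttrans :: "nat \<Rightarrow> tensor \<Rightarrow> tensor" where
  "ttrans n3 A = (\<lambda>i j l. A j i ((n3 - l) mod n3))"

definition tube_mult :: "nat \<Rightarrow> tube \<Rightarrow> tube \<Rightarrow> tube" where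
  "tube_mult n3 a b = idft n3 (\<lambda>k. dft n3 a k * dft n3 b k)"

definition tube_scale :: "nat \<Rightarrow> tube \<Rightarrow> tensor \<Rightarrow> tensor" where
  "tube_scale n3 a B = (\<lambda>i j. tube_mult n3 a (B i j))"

definition tsub :: "tensor \<Rightarrow> tensor \<Rightarrow> tensor" where
  "tsub A B = (\<lambda>i j l. A i j l - B i j l)"

text \<open>T-Kronecker product of A (p x q x n3) and B (m x r x n3): Fourier slices are
  Kronecker products; row index i1*m+i2, column index j1*r+j2.\<close>
definition tkron :: "nat \<Rightarrow> nat \<Rightarrow> nat \<Rightarrow> tensor \<Rightarrow> tensor \<Rightarrow> tensor" where
  "tkron n3 m r A B = (\<lambda>i j. idft n3 (\<lambda>k.
      dft n3 (A (i div m) (j div r)) k * dft n3 (B (i mod m) (j mod r)) k))"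

definition ttrace :: "nat \<Rightarrow> nat \<Rightarrow> tensor \<Rightarrow> tube" where
  "ttrace n3 m A = idft n3 (\<lambda>k. \<Sum>i<m. dft n3 (A i i) k)"

definition tinner :: "nat \<Rightarrow> nat \<Rightarrow> nat \<Rightarrow> tensor \<Rightarrow> tensor \<Rightarrow> tube" where
  "tinner n3 n s X Y = ttrace n3 s (tprod n3 n (ttrans n3 X) Y)"

definition tblock :: "nat \<Rightarrow> tensor \<Rightarrow> nat \<Rightarrow> tensor" where
  "tblock s A i = (\<lambda>a b. A a (i * s + b))"

definition tdiamond :: "nat \<Rightarrow> nat \<Rightarrow> nat \<Rightarrow> tensor \<Rightarrow> tensor \<Rightarrow> tensor" where
  "tdiamond n3 n s A B = (\<lambda>i j. tinner n3 n s (tblock s A i) (tblock s B j))"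

definition fslice_norm :: "nat \<Rightarrow> nat \<Rightarrow> nat \<Rightarrow> tensor \<Rightarrow> nat \<Rightarrow> real" where
  "fslice_norm n3 n s W k = sqrt (\<Sum>i<n. \<Sum>j<s. (cmod (dft n3 (W i j) k))\<^sup>2)"

definition norm_breakdown :: "nat \<Rightarrow> nat \<Rightarrow> nat \<Rightarrow> tensor \<Rightarrow> bool" where
  "norm_breakdown n3 n s W = (\<exists>k<n3. fslice_norm n3 n s W k = 0)"

definition tnormalize :: "nat \<Rightarrow> nat \<Rightarrow> nat \<Rightarrow> tensor \<Rightarrow> tensor \<times> tube" where
  "tnormalize n3 n s W =
     ((\<lambda>i j. idft n3 (\<lambda>k. dft n3 (W i j) k / complex_of_real (fslice_norm n3 n s W k))),
      idft n3 (\<lambda>k. complex_of_real (fslice_norm n3 n s W k)))"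

fun gs_inner :: "nat \<Rightarrow> nat \<Rightarrow> nat \<Rightarrow> tensor list \<Rightarrow> tensor \<Rightarrow> tensor \<times> tube list" where
  "gs_inner n3 n s [] W = (W, [])"
| "gs_inner n3 n s (Q # Qs) W =
     (let r = tinner n3 n s Q W;
          res = gs_inner n3 n s Qs (tsub W (tube_scale n3 r Q))
      in (fst res, r # snd res))"

fun gsQ :: "nat \<Rightarrow> nat \<Rightarrow> nat \<Rightarrow> tensor \<Rightarrow> nat \<Rightarrow> tensor list" where
  "gsQ n3 n s Z 0 = []"
| "gsQ n3 n s Z (Suc j) =
     (let Qs = gsQ n3 n s Z j
      in Qs @ [fst (tnormalize n3 n s (fst (gs_inner n3 n s Qs (tblock s Z j))))])"

definition gsW :: "nat \<Rightarrow> nat \<Rightarrow> nat \<Rightarrow> tensor \<Rightarrow> nat \<Rightarrow> tensor" where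
  "gsW n3 n s Z j = fst (gs_inner n3 n s (gsQ n3 n s Z j) (tblock s Z j))"

definition gsR :: "nat \<Rightarrow> nat \<Rightarrow> nat \<Rightarrow> tensor \<Rightarrow> nat \<Rightarrow> nat \<Rightarrow> tube" where
  "gsR n3 n s Z i j =
     (if i < j then snd (gs_inner n3 n s (gsQ n3 n s Z j) (tblock s Z j)) ! i
      else snd (tnormalize n3 n s (gsW n3 n s Z j)))"

definition gs_completes :: "nat \<Rightarrow> nat \<Rightarrow> nat \<Rightarrow> nat \<Rightarrow> tensor \<Rightarrow> bool" where
  "gs_completes n3 n s k Z = (\<forall>j<k. \<not> norm_breakdown n3 n s (gsW n3 n s Z j))"

definition gs_Qfull :: "nat \<Rightarrow> nat \<Rightarrow> nat \<Rightarrow> nat \<Rightarrow> tensor \<Rightarrow> tensor" where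
  "gs_Qfull n3 n s k Z = (\<lambda>a b. (gsQ n3 n s Z k ! (b div s)) a (b mod s))"

definition gs_Rfull :: "nat \<Rightarrow> nat \<Rightarrow> nat \<Rightarrow> tensor \<Rightarrow> tensor" where
  "gs_Rfull n3 n s Z = (\<lambda>i j. if i \<le> j then gsR n3 n s Z i j else zero_tube)"

end

theory Submission
  imports Defs
begin


lemma omega_pow_n: "0 < n3 \<Longrightarrow> omega n3 ^ n3 = 1"
  by (simp add: omega_def DeMoivre complex_eq_iff)

lemma omega_norm: "cmod (omega n3) = 1"
  by (simp add: omega_def)

lemma omega_pow_mult_n: "0 < n3 \<Longrightarrow> omega n3 ^ (n3 * q) = 1"
  by (simp add: power_mult omega_pow_n)

lemma omega_pow_dvd: assumes "0 < n3" "n3 dvd m" shows "omega n3 ^ m = 1"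
  using assms omega_pow_mult_n by (auto elim!: dvdE)

lemma omega_pow_cnj:
  assumes "0 < n3" "n3 dvd (a + b)"
  shows "omega n3 ^ a = cnj (omega n3 ^ b)"
proof -
  let ?w = "omega n3"
  have 1: "?w ^ a * ?w ^ b = 1" using omega_pow_dvd[OF assms] by (simp add: power_add)
  have 2: "?w ^ b * cnj (?w ^ b) = 1"
    by (metis complex_norm_square mult.commute norm_power omega_norm of_real_1 power_one)
  have "?w ^ a = ?w ^ a * (?w ^ b * cnj (?w ^ b))" using 2 by simp
  also have "\<dots> = cnj (?w ^ b)" using 1 by (simp add: mult.assoc[symmetric])
  finally show ?thesis .
qed

lemma omega_pow_ne1: assumes "0 < j" "j < n3" shows "omega n3 ^ j \<noteq> 1"
proof
  assume "omega n3 ^ j = 1"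
  hence "cis (real j * (- 2 * pi / real n3)) = 1" by (simp add: omega_def DeMoivre)
  hence "cos (real j * (- 2 * pi / real n3)) = 1" by (metis cis.sel(1) one_complex.sel(1))
  from cos_one_2pi_int[THEN iffD1, OF this]
  obtain m :: int where m: "real j * (- 2 * pi / real n3) = real_of_int m * 2 * pi"
    by blast
  have "pi * (real j + m * real n3) = 0" using m assms by (simp add: field_simps)
  hence "real j + m * real n3 = 0" by simp
  hence "real j / real n3 = - m" using assms by (simp add: field_simps)
  moreover have "0 < real j / real n3" "real j / real n3 < 1" using assms by auto
  ultimately have "0 < - m" "- m < 1" by linarith+
  thus False by linarith
qed

lemma omega_orth:
  assumes "0 < n3" "a < n3" "b < n3"
  shows "(\<Sum>x<n3. omega n3 ^ (a * x) * cnj (omega n3) ^ (b * x)) = (if a = b then of_nat n3 else 0)"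
proof -
  let ?w = "omega n3"
  have cw: "cnj ?w = ?w ^ (n3 - 1)"
    using omega_pow_cnj[OF assms(1), of "n3 - 1" 1] assms(1) by simp
  define z where "z = ?w ^ a * ?w ^ ((n3 - 1) * b)"
  have eq: "?w ^ (a * x) * cnj ?w ^ (b * x) = z ^ x" for x
  proof -
    have "cnj ?w ^ (b * x) = (?w ^ ((n3 - 1) * b)) ^ x"
      unfolding cw by (metis power_mult mult.assoc)
    moreover have "?w ^ (a * x) = (?w ^ a) ^ x" by (simp add: power_mult)
    ultimately show ?thesis by (simp add: z_def power_mult_distrib)
  qed
  have zn: "z ^ n3 = 1"
  proof -
    have "z ^ n3 = ?w ^ (a * n3) * ?w ^ (b * (n3 * (n3 - 1)))"
      by (simp add: z_def power_mult_distrib flip: power_mult) (simp add: ac_simps)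
    also have "\<dots> = 1" using omega_pow_dvd[OF assms(1), of "a * n3"] omega_pow_dvd[OF assms(1), of "b * (n3 * (n3 - 1))"]
      by simp
    finally show ?thesis .
  qed
  show ?thesis
  proof (cases "a = b")
    case True
    have "z = ?w ^ a * cnj (?w ^ a)" by (simp add: z_def cw power_mult True)
    also have "\<dots> = 1"
      by (metis complex_norm_square norm_power omega_norm of_real_1 power_one)
    finally show ?thesis using True eq by simp
  next
    case False
    have "z \<noteq> 1"
    proof
      assume z1: "z = 1"
      have zz: "z = ?w ^ a * cnj (?w ^ b)" by (simp add: z_def cw power_mult)
      have wb: "?w ^ b * cnj (?w ^ b) = 1"
        by (metis complex_norm_square mult.commute norm_power omega_norm of_real_1 power_one)
      have "?w ^ a = ?w ^ b"
        using z1 zz wb by (metis mult.assoc mult.commute mult_1_right)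
      show False
      proof (cases "a < b")
        case True
        have "?w ^ b = ?w ^ a * ?w ^ (b - a)" using True by (simp add: power_add[symmetric])
        hence "?w ^ (b - a) = 1" using `?w ^ a = ?w ^ b`
          by (metis mult_cancel_left1 omega_norm power_not_zero zero_neq_one norm_zero)
        thus False using omega_pow_ne1[of "b - a" n3] True assms by simp
      next
        case False
        hence "b < a" using `a \<noteq> b` by simp
        have "?w ^ a = ?w ^ b * ?w ^ (a - b)" using `b < a` by (simp add: power_add[symmetric])
        hence "?w ^ (a - b) = 1" using `?w ^ a = ?w ^ b`
          by (metis mult_cancel_left1 omega_norm power_not_zero zero_neq_one norm_zero)
        thus False using omega_pow_ne1[of "a - b" n3] `b < a` assms by simp
      qed
    qed
    hence "(\<Sum>x<n3. z ^ x) = 0" using geometric_sum[of z n3] zn by simp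
    thus ?thesis using eq False by simp
  qed
qed





lemma inv_mod0: "0 < (n3::nat) \<Longrightarrow> k < n3 \<Longrightarrow> 0 < k \<Longrightarrow> (n3 - k) mod n3 = n3 - k"
  by (rule mod_less) simp

lemma inv_mod: "0 < (n3::nat) \<Longrightarrow> k < n3 \<Longrightarrow> (n3 - (n3 - k) mod n3) mod n3 = k"
  by (cases "k = 0") (auto simp: inv_mod0)


lemma inv_mod_dvd: "0 < (n3::nat) \<Longrightarrow> k < n3 \<Longrightarrow> n3 dvd (((n3 - k) mod n3) * l + k * l)"
proof -
  assume a: "0 < n3" "k < n3"
  have "((n3 - k) mod n3) + k = (if k = 0 then 0 else n3)" using a by (auto simp: inv_mod0)
  hence "((n3 - k) mod n3) * l + k * l = (if k = 0 then 0 else n3 * l)"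
    by (metis add_mult_distrib mult.commute mult_zero_left)
  thus ?thesis by simp
qed

lemma sum_inv_reindex:
  assumes "0 < (n3::nat)"
  shows "(\<Sum>k<n3. f ((n3 - k) mod n3)) = (\<Sum>k<n3. f k)"
  by (rule sum.reindex_bij_witness[where i="\<lambda>k. (n3 - k) mod n3" and j="\<lambda>k. (n3 - k) mod n3"])
     (use assms inv_mod in auto)

definition csym :: "nat \<Rightarrow> (nat \<Rightarrow> complex) \<Rightarrow> bool" where
  "csym n3 c = (\<forall>k<n3. c ((n3 - k) mod n3) = cnj (c k))"

lemma csym_dft: assumes "0 < n3" shows "csym n3 (dft n3 a)"
  unfolding csym_def
proof (intro allI impI)
  fix k assume k: "k < n3"
  have "dft n3 a ((n3 - k) mod n3) = (\<Sum>l<n3. complex_of_real (a l) * cnj (omega n3 ^ (k * l)))"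
    unfolding dft_def
    by (intro sum.cong refl) (metis omega_pow_cnj[OF assms inv_mod_dvd[OF assms k]] mult.commute)
  also have "\<dots> = cnj (dft n3 a k)" by (simp add: dft_def)
  finally show "dft n3 a ((n3 - k) mod n3) = cnj (dft n3 a k)" .
qed

lemma real_of_cnj_eq: "cnj z = z \<Longrightarrow> complex_of_real (Re z) = z"
  by (auto simp: complex_eq_iff)

lemma idft_cong: "(\<And>k. k < n3 \<Longrightarrow> c k = c' k) \<Longrightarrow> idft n3 c = idft n3 c'"
proof (intro ext)
  fix l assume h: "\<And>k. k < n3 \<Longrightarrow> c k = c' k"
  have "(\<Sum>k<n3. c k * cnj (omega n3) ^ (k * l)) = (\<Sum>k<n3. c' k * cnj (omega n3) ^ (k * l))"
    by (rule sum.cong) (auto simp: h)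
  thus "idft n3 c l = idft n3 c' l" unfolding idft_def by simp
qed

lemma dft_cong: "(\<And>l. l < n3 \<Longrightarrow> a l = b l) \<Longrightarrow> dft n3 a = dft n3 b"
proof (intro ext)
  fix k assume h: "\<And>l. l < n3 \<Longrightarrow> a l = b l"
  show "dft n3 a k = dft n3 b k" unfolding dft_def
    by (rule sum.cong) (auto simp: h)
qed

lemma csym_mult: "csym n3 a \<Longrightarrow> csym n3 b \<Longrightarrow> csym n3 (\<lambda>k. a k * b k)"
  by (simp add: csym_def)
lemma csym_diff: "csym n3 a \<Longrightarrow> csym n3 b \<Longrightarrow> csym n3 (\<lambda>k. a k - b k)"
  by (simp add: csym_def)
lemma csym_divide: "csym n3 a \<Longrightarrow> csym n3 b \<Longrightarrow> csym n3 (\<lambda>k. a k / b k)"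
  by (simp add: csym_def)
lemma csym_sum: "(\<And>i. i \<in> A \<Longrightarrow> csym n3 (f i)) \<Longrightarrow> csym n3 (\<lambda>k. \<Sum>i\<in>A. f i k)"
  unfolding csym_def cnj_sum by (intro allI impI sum.cong refl) blast
lemma csym_cnj: "csym n3 a \<Longrightarrow> csym n3 (\<lambda>k. cnj (a k))"
  by (simp add: csym_def)
lemma csym_const: "csym n3 (\<lambda>k. complex_of_real r)"
  by (simp add: csym_def)

lemma dft_idft:
  assumes n: "0 < n3" and c: "csym n3 c" and k: "k < n3"
  shows "dft n3 (idft n3 c) k = c k"
proof -
  let ?w = "omega n3"
  define S where "S l = (\<Sum>k'<n3. c k' * cnj ?w ^ (k' * l))" for l
  have Sreal: "cnj (S l) = S l" for l
  proof -
    define g where "g k' = c k' * ?w ^ (((n3 - k') mod n3) * l)" for k'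
    have "cnj (S l) = (\<Sum>k'<n3. cnj (c k') * ?w ^ (k' * l))" by (simp add: S_def)
    also have "\<dots> = (\<Sum>k'<n3. g ((n3 - k') mod n3))"
      using c n inv_mod by (intro sum.cong refl) (simp add: g_def csym_def)
    also have "\<dots> = (\<Sum>k'<n3. g k')" by (rule sum_inv_reindex[OF n])
    also have "\<dots> = S l" unfolding S_def g_def
      by (intro sum.cong refl)
         (metis omega_pow_cnj[OF n inv_mod_dvd[OF n]] lessThan_iff complex_cnj_power mult.commute)
    finally show ?thesis .
  qed
  have idv: "complex_of_real (idft n3 c l) = S l / of_nat n3" for l
  proof -
    have "cnj (S l / of_nat n3) = S l / of_nat n3" using Sreal[of l] by simp
    thus ?thesis unfolding idft_def S_def[symmetric] by (rule real_of_cnj_eq)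
  qed
  have "dft n3 (idft n3 c) k = (\<Sum>l<n3. S l / of_nat n3 * ?w ^ (k * l))"
    unfolding dft_def idv ..
  also have "\<dots> = (\<Sum>l<n3. \<Sum>k'<n3. c k' * (?w ^ (k * l) * cnj ?w ^ (k' * l)) / of_nat n3)"
    unfolding S_def by (simp add: sum_distrib_left sum_distrib_right sum_divide_distrib mult_ac)
  also have "\<dots> = (\<Sum>k'<n3. c k' * (\<Sum>l<n3. ?w ^ (k * l) * cnj ?w ^ (k' * l)) / of_nat n3)"
    by (subst sum.swap) (simp add: sum_distrib_left sum_divide_distrib)
  also have "\<dots> = (\<Sum>k'<n3. if k' = k then c k else 0)"
    using omega_orth[OF n k] n by (intro sum.cong refl) auto
  also have "\<dots> = c k" using k by simp
  finally show ?thesis .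
qed

lemma idft_dft:
  assumes n: "0 < n3" and l: "l < n3"
  shows "idft n3 (dft n3 a) l = a l"
proof -
  let ?w = "omega n3"
  have "(\<Sum>k<n3. dft n3 a k * cnj ?w ^ (k * l))
      = (\<Sum>k<n3. \<Sum>l'<n3. complex_of_real (a l') * (?w ^ (l' * k) * cnj ?w ^ (l * k)))"
    unfolding dft_def by (simp add: sum_distrib_left sum_distrib_right mult_ac)
  also have "\<dots> = (\<Sum>l'<n3. complex_of_real (a l') * (\<Sum>k<n3. ?w ^ (l' * k) * cnj ?w ^ (l * k)))"
    by (subst sum.swap) (simp add: sum_distrib_left)
  also have "\<dots> = (\<Sum>l'<n3. if l' = l then complex_of_real (a l) * of_nat n3 else 0)"
    using omega_orth[OF n _ l] by (intro sum.cong refl) auto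
  also have "\<dots> = complex_of_real (a l) * of_nat n3" using l by simp
  finally show ?thesis using n unfolding idft_def by simp
qed





definition hat :: "nat \<Rightarrow> nat \<Rightarrow> tensor \<Rightarrow> nat \<Rightarrow> nat \<Rightarrow> complex" where
  "hat n3 q X = (\<lambda>a b. dft n3 (X a b) q)"

definition ip :: "nat \<Rightarrow> nat \<Rightarrow> (nat \<Rightarrow> nat \<Rightarrow> complex) \<Rightarrow> (nat \<Rightarrow> nat \<Rightarrow> complex) \<Rightarrow> complex" where
  "ip n s A B = (\<Sum>b<s. \<Sum>a<n. cnj (A a b) * B a b)"

lemma dft_tprod: "0 < n3 \<Longrightarrow> q < n3 \<Longrightarrow>
  dft n3 (tprod n3 m A B i j) q = (\<Sum>l<m. dft n3 (A i l) q * dft n3 (B l j) q)"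
  unfolding tprod_def by (rule dft_idft) (auto intro!: csym_sum csym_mult csym_dft)

lemma dft_tube_mult: "0 < n3 \<Longrightarrow> q < n3 \<Longrightarrow>
  dft n3 (tube_mult n3 a b) q = dft n3 a q * dft n3 b q"
  unfolding tube_mult_def by (rule dft_idft) (auto intro!: csym_mult csym_dft)

lemma dft_tube_scale: "0 < n3 \<Longrightarrow> q < n3 \<Longrightarrow>
  dft n3 (tube_scale n3 r Q i j) q = dft n3 r q * dft n3 (Q i j) q"
  unfolding tube_scale_def by (rule dft_tube_mult)

lemma dft_tsub: "dft n3 (tsub A B i j) q = dft n3 (A i j) q - dft n3 (B i j) q"
  by (simp add: dft_def tsub_def sum_subtractf algebra_simps)

lemma dft_ttrans:
  assumes n: "0 < n3"
  shows "dft n3 (ttrans n3 A i j) q = cnj (dft n3 (A j i) q)"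
proof -
  let ?w = "omega n3"
  define f where "f l = complex_of_real (A j i l) * ?w ^ (q * ((n3 - l) mod n3))" for l
  have "dft n3 (ttrans n3 A i j) q = (\<Sum>l<n3. f ((n3 - l) mod n3))"
    unfolding dft_def ttrans_def f_def using inv_mod[OF n] by (intro sum.cong refl) auto
  also have "\<dots> = (\<Sum>l<n3. f l)" by (rule sum_inv_reindex[OF n])
  also have "\<dots> = (\<Sum>l<n3. complex_of_real (A j i l) * cnj (?w ^ (q * l)))"
  proof (intro sum.cong refl)
    fix l assume "l \<in> {..<n3}"
    hence "n3 dvd (q * ((n3 - l) mod n3) + q * l)"
      using inv_mod_dvd[OF n, of l q] by (simp add: mult.commute)
    thus "f l = complex_of_real (A j i l) * cnj (?w ^ (q * l))"
      unfolding f_def using omega_pow_cnj[OF n] by simp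
  qed
  also have "\<dots> = cnj (dft n3 (A j i) q)" by (simp add: dft_def)
  finally show ?thesis .
qed

lemma dft_ttrace: "0 < n3 \<Longrightarrow> q < n3 \<Longrightarrow>
  dft n3 (ttrace n3 m A) q = (\<Sum>i<m. dft n3 (A i i) q)"
  unfolding ttrace_def by (rule dft_idft) (auto intro!: csym_sum csym_dft)

lemma csym_ip: "0 < n3 \<Longrightarrow> csym n3 (\<lambda>q. ip n s (hat n3 q X) (hat n3 q Y))"
  unfolding ip_def hat_def by (auto intro!: csym_sum csym_mult csym_cnj csym_dft)

lemma tinner_idft: assumes n: "0 < n3"
  shows "tinner n3 n s X Y = idft n3 (\<lambda>q. ip n s (hat n3 q X) (hat n3 q Y))"
  unfolding tinner_def ttrace_def
proof (rule idft_cong)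
  fix q assume q: "q < n3"
  show "(\<Sum>i<s. dft n3 (tprod n3 n (ttrans n3 X) Y i i) q) = ip n s (hat n3 q X) (hat n3 q Y)"
    unfolding ip_def hat_def dft_tprod[OF n q] dft_ttrans[OF n] ..
qed

lemma dft_tinner: "0 < n3 \<Longrightarrow> q < n3 \<Longrightarrow>
  dft n3 (tinner n3 n s X Y) q = ip n s (hat n3 q X) (hat n3 q Y)"
  unfolding tinner_idft by (rule dft_idft) (auto intro!: csym_ip)

lemma dft_tkron: "0 < n3 \<Longrightarrow> q < n3 \<Longrightarrow>
  dft n3 (tkron n3 m r A B i j) q
   = dft n3 (A (i div m) (j div r)) q * dft n3 (B (i mod m) (j mod r)) q"
  unfolding tkron_def by (rule dft_idft) (auto intro!: csym_mult csym_dft)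

lemma fslice_norm_sym: assumes n: "0 < n3" and q: "q < n3"
  shows "fslice_norm n3 n s W ((n3 - q) mod n3) = fslice_norm n3 n s W q"
  unfolding fslice_norm_def using csym_dft[OF n] q by (simp add: csym_def)

lemma csym_fslice: "0 < n3 \<Longrightarrow> csym n3 (\<lambda>k. complex_of_real (fslice_norm n3 n s W k))"
  unfolding csym_def using fslice_norm_sym by simp

lemma dft_tnorm_fst: "0 < n3 \<Longrightarrow> q < n3 \<Longrightarrow>
  dft n3 (fst (tnormalize n3 n s W) i j) q = dft n3 (W i j) q / complex_of_real (fslice_norm n3 n s W q)"
  unfolding tnormalize_def fst_conv by (rule dft_idft) (auto intro!: csym_divide csym_dft csym_fslice)

lemma dft_tnorm_snd: "0 < n3 \<Longrightarrow> q < n3 \<Longrightarrow>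
  dft n3 (snd (tnormalize n3 n s W)) q = complex_of_real (fslice_norm n3 n s W q)"
  unfolding tnormalize_def snd_conv by (rule dft_idft) (auto intro!: csym_fslice)

lemma dft_tid: assumes "0 < n3" shows "dft n3 (tid i j) q = (if i = j then 1 else 0)"
proof -
  have "dft n3 (tid i j) q = (\<Sum>l<n3. if l = 0 then (if i = j then 1 else 0) else 0)"
    unfolding dft_def tid_def by (intro sum.cong refl) auto
  thus ?thesis using assms by simp
qed

lemma dft_zero: "dft n3 zero_tube q = 0"
  by (simp add: dft_def zero_tube_def)

lemma idft_const1: assumes n: "0 < n3" and l: "l < n3"
  shows "idft n3 (\<lambda>_. 1) l = (if l = 0 then 1 else 0)"
proof -
  have "(\<Sum>k<n3. 1 * cnj (omega n3) ^ (k * l)) = (\<Sum>x<n3. omega n3 ^ (0 * x) * cnj (omega n3) ^ (l * x))"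
    by (simp add: mult.commute)
  also have "\<dots> = (if 0 = l then of_nat n3 else 0)" by (rule omega_orth[OF n n l])
  finally show ?thesis unfolding idft_def using n by auto
qed

lemma idft_const0: "idft n3 (\<lambda>_. 0) l = 0"
  by (simp add: idft_def)

lemma ip_cong: "(\<And>a b. a < n \<Longrightarrow> b < s \<Longrightarrow> A a b = A' a b) \<Longrightarrow>
  (\<And>a b. a < n \<Longrightarrow> b < s \<Longrightarrow> B a b = B' a b) \<Longrightarrow> ip n s A B = ip n s A' B'"
  unfolding ip_def by (intro sum.cong refl) auto

lemma ip_diff_right: "ip n s A (\<lambda>a b. X a b - c * Y a b) = ip n s A X - c * ip n s A Y"
  unfolding ip_def by (simp add: algebra_simps sum_subtractf sum_distrib_left)

lemma ip_sum_right: "ip n s A (\<lambda>a b. \<Sum>p\<in>P. c p * Y p a b) = (\<Sum>p\<in>P. c p * ip n s A (Y p))"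
  unfolding ip_def sum_distrib_left
  by (subst sum.swap, intro sum.cong refl, subst sum.swap) (simp add: sum_distrib_left mult_ac)

lemma ip_div_right: "ip n s A (\<lambda>a b. B a b / x) = ip n s A B / x"
  unfolding ip_def by (simp add: sum_divide_distrib)

lemma ip_div_left: "ip n s (\<lambda>a b. A a b / x) B = ip n s A B / cnj x"
  unfolding ip_def by (simp add: sum_divide_distrib)

lemma ip_cnj: "ip n s B A = cnj (ip n s A B)"
  unfolding ip_def by (simp add: mult.commute)

lemma ip_self: "ip n s A A = complex_of_real (\<Sum>b<s. \<Sum>a<n. (cmod (A a b))\<^sup>2)"
  unfolding ip_def of_real_sum
  by (intro sum.cong refl) (metis complex_norm_square mult.commute of_real_power)




lemma ip_diff: "ip n s A (\<lambda>a b. X a b - Y a b) = ip n s A X - ip n s A Y"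
  unfolding ip_def by (simp add: algebra_simps sum_subtractf)

lemma gs_inner_len: "length (snd (gs_inner n3 n s Qs W)) = length Qs"
  by (induction Qs arbitrary: W) (auto simp: Let_def)

lemma gs_inner_decomp:
  assumes n: "0 < n3" and q: "q < n3"
  shows "hat n3 q W a b = hat n3 q (fst (gs_inner n3 n s Qs W)) a b
     + (\<Sum>p<length Qs. dft n3 (snd (gs_inner n3 n s Qs W) ! p) q * hat n3 q (Qs ! p) a b)"
proof (induction Qs arbitrary: W)
  case Nil
  then show ?case by simp
next
  case (Cons Q Qs)
  define r where "r = tinner n3 n s Q W"
  define W1 where "W1 = tsub W (tube_scale n3 r Q)"
  have g: "gs_inner n3 n s (Q # Qs) W = (fst (gs_inner n3 n s Qs W1), r # snd (gs_inner n3 n s Qs W1))"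
    by (simp add: Let_def r_def W1_def)
  have h1: "hat n3 q W1 a b = hat n3 q W a b - dft n3 r q * hat n3 q Q a b"
    unfolding W1_def hat_def dft_tsub dft_tube_scale[OF n q] ..
  show ?case
    unfolding g fst_conv snd_conv length_Cons sum.lessThan_Suc_shift nth_Cons_0 nth_Cons_Suc
    using Cons.IH[of W1] h1 by (simp add: algebra_simps)
qed

definition orthon :: "nat \<Rightarrow> nat \<Rightarrow> nat \<Rightarrow> nat \<Rightarrow> tensor list \<Rightarrow> bool" where
  "orthon n3 n s q Qs = (\<forall>p<length Qs. \<forall>p'<length Qs.
      ip n s (hat n3 q (Qs ! p)) (hat n3 q (Qs ! p')) = (if p = p' then 1 else 0))"

lemma gs_inner_orth:
  assumes n: "0 < n3" and q: "q < n3"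
  shows "orthon n3 n s q Qs \<Longrightarrow> p < length Qs \<Longrightarrow>
     ip n s (hat n3 q (Qs ! p)) (hat n3 q (fst (gs_inner n3 n s Qs W))) = 0"
proof (induction Qs arbitrary: W p)
  case Nil
  then show ?case by simp
next
  case (Cons Q Qs)
  define r where "r = tinner n3 n s Q W"
  define W1 where "W1 = tsub W (tube_scale n3 r Q)"
  have g: "fst (gs_inner n3 n s (Q # Qs) W) = fst (gs_inner n3 n s Qs W1)"
    by (simp add: Let_def r_def W1_def)
  have orQs: "orthon n3 n s q Qs"
    using Cons.prems(1) unfolding orthon_def by (metis Suc_less_eq length_Cons nat.inject nth_Cons_Suc)
  show ?case
  proof (cases p)
    case (Suc p')
    then show ?thesis unfolding g using Cons.IH[OF orQs, of p' W1] Cons.prems(2) by simp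
  next
    case 0
    have QQ: "ip n s (hat n3 q Q) (hat n3 q Q) = 1"
      using Cons.prems(1) unfolding orthon_def by (metis length_Cons nth_Cons_0 zero_less_Suc)
    have QQs: "ip n s (hat n3 q Q) (hat n3 q (Qs ! p')) = 0" if "p' < length Qs" for p'
      using Cons.prems(1) that unfolding orthon_def
      by (metis Suc_less_eq length_Cons nat.distinct(1) nth_Cons_0 nth_Cons_Suc zero_less_Suc)
    have h1: "hat n3 q W1 = (\<lambda>a b. hat n3 q W a b - dft n3 r q * hat n3 q Q a b)"
      unfolding W1_def hat_def dft_tsub dft_tube_scale[OF n q] ..
    have r: "dft n3 r q = ip n s (hat n3 q Q) (hat n3 q W)"
      unfolding r_def by (rule dft_tinner[OF n q])
    have W1o: "ip n s (hat n3 q Q) (hat n3 q W1) = 0"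
      unfolding h1 ip_diff_right r QQ by simp
    let ?rs = "snd (gs_inner n3 n s Qs W1)"
    have dec: "hat n3 q (fst (gs_inner n3 n s Qs W1)) = (\<lambda>a b. hat n3 q W1 a b -
        (\<Sum>p<length Qs. dft n3 (?rs ! p) q * hat n3 q (Qs ! p) a b))"
      using gs_inner_decomp[OF n q, of W1 _ _ n s Qs] by (intro ext) (simp add: algebra_simps)
    have "ip n s (hat n3 q Q) (hat n3 q (fst (gs_inner n3 n s Qs W1)))
        = ip n s (hat n3 q Q) (hat n3 q W1) - (\<Sum>p<length Qs. dft n3 (?rs ! p) q * ip n s (hat n3 q Q) (hat n3 q (Qs ! p)))"
      unfolding dec ip_diff ip_sum_right[where Y="\<lambda>p. hat n3 q (Qs ! p)"] ..
    also have "\<dots> = 0" using W1o QQs by simp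
    finally show ?thesis unfolding g using 0 by simp
  qed
qed

lemma length_gsQ: "length (gsQ n3 n s Z j) = j"
  by (induction j) (simp_all add: Let_def)

lemma gsQ_nth: "p < j \<Longrightarrow> j \<le> m \<Longrightarrow> gsQ n3 n s Z m ! p = gsQ n3 n s Z j ! p"
proof (induction m)
  case 0
  then show ?case by simp
next
  case (Suc m)
  show ?case
  proof (cases "j = Suc m")
    case False
    hence "j \<le> m" using Suc.prems by simp
    hence "p < length (gsQ n3 n s Z m)" using Suc.prems length_gsQ by (metis order_less_le_trans)
    thus ?thesis using Suc.IH[OF Suc.prems(1) `j \<le> m`] by (simp add: Let_def nth_append)
  qed simp
qed

lemma gsQ_last: "gsQ n3 n s Z (Suc j) ! j = fst (tnormalize n3 n s (gsW n3 n s Z j))"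
  by (simp add: Let_def gsW_def nth_append length_gsQ)

lemma gsQ_Suc: "gsQ n3 n s Z (Suc j) = gsQ n3 n s Z j @ [fst (tnormalize n3 n s (gsW n3 n s Z j))]"
  by (simp add: Let_def gsW_def)

lemma no_bd: "gs_completes n3 n s k Z \<Longrightarrow> j < k \<Longrightarrow> q < n3 \<Longrightarrow> fslice_norm n3 n s (gsW n3 n s Z j) q \<noteq> 0"
  unfolding gs_completes_def norm_breakdown_def by blast

lemma ip_self_norm: "ip n s (hat n3 q W) (hat n3 q W) = complex_of_real ((fslice_norm n3 n s W q)\<^sup>2)"
proof -
  have "(fslice_norm n3 n s W q)\<^sup>2 = (\<Sum>i<n. \<Sum>j<s. (cmod (dft n3 (W i j) q))\<^sup>2)"
    unfolding fslice_norm_def by (rule real_sqrt_pow2) (intro sum_nonneg zero_le_power2)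
  also have "\<dots> = (\<Sum>b<s. \<Sum>a<n. (cmod (hat n3 q W a b))\<^sup>2)"
    by (subst sum.swap) (simp add: hat_def)
  finally show ?thesis using ip_self by simp
qed

lemma hat_norm: "0 < n3 \<Longrightarrow> q < n3 \<Longrightarrow> hat n3 q (fst (tnormalize n3 n s W))
   = (\<lambda>a b. hat n3 q W a b / complex_of_real (fslice_norm n3 n s W q))"
  unfolding hat_def by (intro ext) (rule dft_tnorm_fst)

lemma orthon_gsQ:
  assumes n: "0 < n3" and q: "q < n3" and c: "gs_completes n3 n s k Z"
  shows "j \<le> k \<Longrightarrow> orthon n3 n s q (gsQ n3 n s Z j)"
proof (induction j)
  case 0
  then show ?case by (simp add: orthon_def)
next
  case (Suc j)
  let ?Qs = "gsQ n3 n s Z j"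
  let ?W = "gsW n3 n s Z j"
  let ?N = "fslice_norm n3 n s ?W q"
  let ?Qn = "fst (tnormalize n3 n s ?W)"
  have IH: "orthon n3 n s q ?Qs" using Suc by simp
  have N: "?N \<noteq> 0" using no_bd[OF c _ q] Suc.prems by simp
  have hQn: "hat n3 q ?Qn = (\<lambda>a b. hat n3 q ?W a b / complex_of_real ?N)"
    by (rule hat_norm[OF n q])
  have nn: "ip n s (hat n3 q ?Qn) (hat n3 q ?Qn) = 1"
    unfolding hQn ip_div_left ip_div_right ip_self_norm using N
    by (simp add: power2_eq_square)
  have on: "ip n s (hat n3 q (?Qs ! p)) (hat n3 q ?Qn) = 0" if "p < j" for p
    unfolding hQn ip_div_right
    using gs_inner_orth[OF n q IH, of p] that length_gsQ by (simp add: gsW_def)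
  have no: "ip n s (hat n3 q ?Qn) (hat n3 q (?Qs ! p)) = 0" if "p < j" for p
    using on[OF that] ip_cnj by (metis complex_cnj_zero_iff)
  show ?case
    unfolding orthon_def gsQ_Suc
  proof (intro allI impI)
    fix p p' assume p: "p < length (?Qs @ [?Qn])" and p': "p' < length (?Qs @ [?Qn])"
    hence p: "p < Suc j" and p': "p' < Suc j" by (simp_all add: length_gsQ)
    show "ip n s (hat n3 q ((?Qs @ [?Qn]) ! p)) (hat n3 q ((?Qs @ [?Qn]) ! p')) = (if p = p' then 1 else 0)"
    proof (cases "p < j"; cases "p' < j")
      assume "p < j" "p' < j"
      thus ?thesis using IH unfolding orthon_def by (simp add: nth_append length_gsQ)
    next
      assume "p < j" "\<not> p' < j"
      hence "p' = j" using p' by simp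
      thus ?thesis using on[OF `p < j`] `p < j` by (simp add: nth_append length_gsQ)
    next
      assume "\<not> p < j" "p' < j"
      hence "p = j" using p by simp
      thus ?thesis using no[OF `p' < j`] `p' < j` by (simp add: nth_append length_gsQ)
    next
      assume "\<not> p < j" "\<not> p' < j"
      hence "p = j" "p' = j" using p p' by simp_all
      thus ?thesis using nn by (simp add: nth_append length_gsQ)
    qed
  qed
qed

lemma sum_blocks: fixes f :: "nat \<Rightarrow> 'a::comm_monoid_add" shows "(\<Sum>l<k * s. f l) = (\<Sum>p<k. \<Sum>c<s. f (p * s + c)) "
proof -
  have "(\<Sum>l<k * s. f l) = (\<Sum>p<k. sum f {p * s..<p * s + s})"
    using sum.nat_group[of f s k] by simp
  also have "\<dots> = (\<Sum>p<k. \<Sum>c<s. f (p * s + c))"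
  proof (rule sum.cong[OF refl])
    fix p
    show "sum f {p * s..<p * s + s} = (\<Sum>c<s. f (p * s + c))"
      using sum.atLeastLessThan_shift_bounds[of f 0 "p * s" s]
      by (simp add: atLeast0LessThan add.commute comp_def)
  qed
  finally show ?thesis .
qed




theorem proposition5:
  fixes n s k n3 :: nat and Z :: tensor
  assumes "0 < n3" and "s < n"
    and "gs_completes n3 n s k Z"
  shows "(\<forall>i<n. \<forall>j<k * s. \<forall>l<n3.
            Z i j l = tprod n3 (k * s) (gs_Qfull n3 n s k Z)
                        (tkron n3 s s (gs_Rfull n3 n s Z) tid) i j l)
       \<and> (\<forall>i<k. \<forall>j<k. \<forall>l<n3.
            tdiamond n3 n s (gs_Qfull n3 n s k Z) (gs_Qfull n3 n s k Z) i j l = tid i j l)"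
proof -
  let ?Qf = "gs_Qfull n3 n s k Z"
  let ?R = "gs_Rfull n3 n s Z"
  have n: "0 < n3" using assms(1) .
  have c: "gs_completes n3 n s k Z" using assms(3) .
  have orth: "orthon n3 n s q (gsQ n3 n s Z k)" if "q < n3" for q
    using orthon_gsQ[OF n that c] by simp
  have blk: "tblock s ?Qf i a b = (gsQ n3 n s Z k ! i) a b" if "b < s" for i a b
  proof -
    have "(i * s + b) div s = i" "(i * s + b) mod s = b" using that by auto
    thus ?thesis by (simp add: tblock_def gs_Qfull_def)
  qed
  have P2: "\<forall>i<k. \<forall>j<k. \<forall>l<n3. tdiamond n3 n s ?Qf ?Qf i j l = tid i j l"
  proof (intro allI impI)
    fix i j l assume i: "i < k" and j: "j < k" and l: "l < n3"
    have "tdiamond n3 n s ?Qf ?Qf i j = idft n3 (\<lambda>q. if i = j then 1 else 0)"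
      unfolding tdiamond_def tinner_idft[OF n]
    proof (rule idft_cong)
      fix q assume q: "q < n3"
      have "ip n s (hat n3 q (tblock s ?Qf i)) (hat n3 q (tblock s ?Qf j))
          = ip n s (hat n3 q (gsQ n3 n s Z k ! i)) (hat n3 q (gsQ n3 n s Z k ! j))"
        by (rule ip_cong) (simp_all add: hat_def blk)
      also have "\<dots> = (if i = j then 1 else 0)"
        using orth[OF q] i j length_gsQ unfolding orthon_def by simp
      finally show "ip n s (hat n3 q (tblock s ?Qf i)) (hat n3 q (tblock s ?Qf j)) = (if i = j then 1 else 0)" .
    qed
    then show "tdiamond n3 n s ?Qf ?Qf i j l = tid i j l"
      using idft_const1[OF n l] idft_const0 by (cases "i = j") (auto simp: tid_def)
  qed
  have P1: "\<forall>i<n. \<forall>j<k * s. \<forall>l<n3. Z i j l = tprod n3 (k * s) ?Qf (tkron n3 s s ?R tid) i j l"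
  proof (intro allI impI)
    fix i j l assume i: "i < n" and j: "j < k * s" and l: "l < n3"
    have spos: "0 < s" using j by (cases "s = 0") auto
    define jj where "jj = j div s"
    define b where "b = j mod s"
    have jj: "jj < k" unfolding jj_def using j by (simp add: less_mult_imp_div_less)
    have b: "b < s" unfolding b_def using spos by simp
    have jeq: "jj * s + b = j" unfolding jj_def b_def by simp
    have "idft n3 (dft n3 (Z i j)) = tprod n3 (k * s) ?Qf (tkron n3 s s ?R tid) i j"
      unfolding tprod_def
    proof (rule idft_cong)
      fix q assume q: "q < n3"
      let ?Qs = "gsQ n3 n s Z jj"
      let ?W = "gsW n3 n s Z jj"
      let ?rs = "snd (gs_inner n3 n s ?Qs (tblock s Z jj))"
      let ?N = "fslice_norm n3 n s ?W q"
      let ?X = "\<lambda>p. dft n3 ((gsQ n3 n s Z k ! p) i b) q * dft n3 (gsR n3 n s Z p jj) q"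
      have N: "?N \<noteq> 0" using no_bd[OF c jj q] .
      have "dft n3 (Z i j) q = dft n3 (tblock s Z jj i b) q"
        unfolding tblock_def jeq ..
      also have "\<dots> = hat n3 q ?W i b + (\<Sum>p<jj. dft n3 (?rs ! p) q * hat n3 q (?Qs ! p) i b)"
        using gs_inner_decomp[OF n q, of "tblock s Z jj" i b n s ?Qs] length_gsQ
        unfolding gsW_def by (simp add: hat_def)
      also have "hat n3 q ?W i b = ?X jj"
      proof -
        have "gsQ n3 n s Z k ! jj = gsQ n3 n s Z (Suc jj) ! jj"
          using gsQ_nth[of jj "Suc jj" k] jj by simp
        also have "\<dots> = fst (tnormalize n3 n s ?W)" by (rule gsQ_last)
        finally have e1: "gsQ n3 n s Z k ! jj = fst (tnormalize n3 n s ?W)" .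
        have e2: "gsR n3 n s Z jj jj = snd (tnormalize n3 n s ?W)" by (simp add: gsR_def)
        show ?thesis unfolding e1 e2 dft_tnorm_fst[OF n q] dft_tnorm_snd[OF n q]
          using N by (simp add: hat_def)
      qed
      also have "(\<Sum>p<jj. dft n3 (?rs ! p) q * hat n3 q (?Qs ! p) i b) = (\<Sum>p<jj. ?X p)"
      proof (rule sum.cong[OF refl])
        fix p assume "p \<in> {..<jj}"
        hence p: "p < jj" by simp
        have "gsQ n3 n s Z k ! p = ?Qs ! p" using gsQ_nth[of p jj k] p jj by simp
        moreover have "gsR n3 n s Z p jj = ?rs ! p" using p by (simp add: gsR_def)
        ultimately show "dft n3 (?rs ! p) q * hat n3 q (?Qs ! p) i b = ?X p"
          by (simp add: hat_def mult.commute)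
      qed
      also have "?X jj + (\<Sum>p<jj. ?X p) = (\<Sum>p<Suc jj. ?X p)" by simp
      also have "\<dots> = (\<Sum>p<k. dft n3 ((gsQ n3 n s Z k ! p) i b) q * dft n3 (?R p jj) q)"
      proof (rule sum.mono_neutral_cong_left)
        show "{..<Suc jj} \<subseteq> {..<k}" using jj by auto
        show "\<forall>p\<in>{..<k} - {..<Suc jj}. dft n3 ((gsQ n3 n s Z k ! p) i b) q * dft n3 (?R p jj) q = 0"
          by (auto simp: gs_Rfull_def dft_zero)
        show "\<And>p. p \<in> {..<Suc jj} \<Longrightarrow> ?X p = dft n3 ((gsQ n3 n s Z k ! p) i b) q * dft n3 (?R p jj) q"
          by (auto simp: gs_Rfull_def)
      qed simp
      also have "\<dots> = (\<Sum>p<k. \<Sum>c<s. dft n3 (?Qf i (p * s + c)) q * dft n3 (tkron n3 s s ?R tid (p * s + c) j) q)"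
      proof (rule sum.cong[OF refl])
        fix p
        have "(\<Sum>c<s. dft n3 (?Qf i (p * s + c)) q * dft n3 (tkron n3 s s ?R tid (p * s + c) j) q)
            = (\<Sum>c<s. if c = b then dft n3 ((gsQ n3 n s Z k ! p) i b) q * dft n3 (?R p jj) q else 0)"
        proof (rule sum.cong[OF refl])
          fix c assume "c \<in> {..<s}"
          hence cs: "c < s" by simp
          have "(p * s + c) div s = p" "(p * s + c) mod s = c" using cs by auto
          thus "dft n3 (?Qf i (p * s + c)) q * dft n3 (tkron n3 s s ?R tid (p * s + c) j) q
             = (if c = b then dft n3 ((gsQ n3 n s Z k ! p) i b) q * dft n3 (?R p jj) q else 0)"
            unfolding dft_tkron[OF n q] dft_tid[OF n]
            by (simp add: gs_Qfull_def jj_def[symmetric] b_def[symmetric])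
        qed
        also have "\<dots> = dft n3 ((gsQ n3 n s Z k ! p) i b) q * dft n3 (?R p jj) q"
          using b by simp
        finally show "dft n3 ((gsQ n3 n s Z k ! p) i b) q * dft n3 (?R p jj) q =
          (\<Sum>c<s. dft n3 (?Qf i (p * s + c)) q * dft n3 (tkron n3 s s ?R tid (p * s + c) j) q)" by simp
      qed
      also have "\<dots> = (\<Sum>l<k * s. dft n3 (?Qf i l) q * dft n3 (tkron n3 s s ?R tid l j) q)"
        by (rule sum_blocks[symmetric])
      finally show "dft n3 (Z i j) q = (\<Sum>l<k * s. dft n3 (?Qf i l) q * dft n3 (tkron n3 s s ?R tid l j) q)"
        by (simp add: add.commute)
    qed
    moreover have "Z i j l = idft n3 (dft n3 (Z i j)) l" using idft_dft[OF n l] by simp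
    ultimately show "Z i j l = tprod n3 (k * s) ?Qf (tkron n3 s s ?R tid) i j l" by simp
  qed
  show ?thesis using P1 P2 by blast
qed


end
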